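(* Let $(X,Y,G)$ be random with $X\in\mathcal{X}$, $Y\in\{0,1\}$, $G\in\{a,b\}$, $\Pr[G=g]>0$ and $0<p_g<1$ for $g\in\{a,b\}$, where $p_g:=\Pr[Y=1\mid G=g]$, and $\Delta p:=p_a-p_b\neq0$. Let $k$ be a measurable positive-definite kernel on $\mathcal{X}$ with RKHS $\mathcal{H}$, feature map $\phi$ and $\sup_x k(x,x)\le\kappa^2<\infty$. Let $P_g$ be the law of $X$ given $G=g$, $Q:=\tfrac12(P_a+P_b)$, $\mu:=\mathbb{E}_{X\sim Q}[\phi(X)]$, $\Sigma:=\mathbb{E}_{X\sim Q}[(\phi(X)-\mu)\otimes(\phi(X)-\mu)]=\sum_j\lambda_j e_j\otimes e_j$ with $\lambda_1\ge\lambda_2\ge\cdots\ge0$ and $\{e_j\}$ orthonormal, and assume there exist $\alpha>1$, $c_1,c_2>0$ with $c_1j^{-\alpha}\le\lambda_j\le c_2j^{-\alpha}$ for all $j$. Let $\mu_{y,g}:=\mathbb{E}[\phi(X)\mid Y=y,G=g]$, $\delta_y:=\mu_{y,a}-\mu_{y,b}$, and assume, for fixed $r>0$, $R>0$, that $\delta_y=\Sigma^r u_y$ with $\|u_y\|_{\mathcal{H}}\le R$ for $y\in\{0,1\}$. Let $S=\langle w,\phi(X)\rangle_{\mathcal{H}}\in[0,1]$ a.s. with $\|w\|_{\mathcal{H}}\le W$ and $\mathbb{E}[S\mid G=g]=p_g$ for $g\in\{a,b\}$. Let $V_m:=\operatorname{span}\{e_1,\dots,e_m\}$ and suppose $P_{V_m}\delta_y=0$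 for $y\in\{0,1\}$. Then, with $\rho_m:=\max_{h\in\{a,b\}}[p_h\|\delta_1\|_{\mathcal{H}}+(1-p_h)\|\delta_0\|_{\mathcal{H}}]$, \[\rho_m\le R\lambda_{m+1}^r=\Theta\big(R(m+1)^{-\alpha r}\big),\quad\text{hence}\quad \Pr[|S-Y|>t]\le\frac{W R\lambda_{m+1}^r}{|\Delta p|\,t}\ \text{ for all } t\in(0,1].\] Moreover, if these hypotheses (for the fixed distribution and fixed $S$) hold for a sequence of values $m\to\infty$, then $S=Y$ almost surely.
   Context: $P_{V_m}$ is the orthogonal projection onto $V_m$; $\Sigma^r$ is defined by functional calculus ($\Sigma^re_j=\lambda_j^re_j$). Implicit constants in $\Theta$ depend only on $c_1,c_2,r$. *)

theory Defs
  imports "HOL-Probability.Probability"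
begin

definition cond_exp_ev :: "'a measure \<Rightarrow> 'a set \<Rightarrow> ('a \<Rightarrow> real) \<Rightarrow> real" where
  "cond_exp_ev M A f = (\<integral>\<omega>. indicator A \<omega> * f \<omega> \<partial>M) / measure M A"

definition cond_prob_ev :: "'a measure \<Rightarrow> 'a set \<Rightarrow> 'a set \<Rightarrow> real" where
  "cond_prob_ev M A B = measure M (A \<inter> B) / measure M A"

definition orth_proj :: "'h::real_inner set \<Rightarrow> 'h \<Rightarrow> 'h" where
  "orth_proj V x = (THE p. p \<in> V \<and> (\<forall>v\<in>V. (x - p) \<bullet> v = 0))"

text \<open>Functional calculus Sigma^r for Sigma = sum_{j>=1} lam_j e_j (x) e_j (orthonormal e_j, j >= 1),
  r > 0: Sigma^r e_j = lam_j^r e_j and Sigma^r = 0 on the orthogonal complement of the e_j.\<close>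
definition spec_pow :: "(nat \<Rightarrow> real) \<Rightarrow> (nat \<Rightarrow> 'h::{real_inner,complete_space}) \<Rightarrow> real \<Rightarrow> 'h \<Rightarrow> 'h" where
  "spec_pow lam e r u = (\<Sum>j. (lam (Suc j) powr r * (e (Suc j) \<bullet> u)) *\<^sub>R e (Suc j))"

end

theory Submission
  imports Defs
begin


definition "orthon (e::nat \<Rightarrow> 'h::real_inner) \<longleftrightarrow> (\<forall>i\<ge>1. \<forall>j\<ge>1. e i \<bullet> e j = (if i = j then 1 else 0))"

lemma orth_fin_norm:
  fixes e :: "nat \<Rightarrow> 'h::real_inner"
  assumes "orthon e" "finite A"
  shows "(norm (\<Sum>j\<in>A. c j *\<^sub>R e (Suc j)))\<^sup>2 = (\<Sum>j\<in>A. (c j)\<^sup>2)"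
proof -
  have "(norm (\<Sum>j\<in>A. c j *\<^sub>R e (Suc j)))\<^sup>2 = (\<Sum>i\<in>A. \<Sum>j\<in>A. c i * (c j * (e (Suc j) \<bullet> e (Suc i))))"
    by (simp add: power2_norm_eq_inner inner_sum_left inner_sum_right sum_distrib_left mult.assoc)
  also have "\<dots> = (\<Sum>i\<in>A. \<Sum>j\<in>A. if i = j then c i * c j else 0)"
    using assms(1) unfolding orthon_def by (intro sum.cong refl) auto
  also have "\<dots> = (\<Sum>j\<in>A. (c j)\<^sup>2)"
    using assms(2) by (simp add: power2_eq_square)
  finally show ?thesis .
qed

lemma orth_coeff_fin:
  fixes e :: "nat \<Rightarrow> 'h::real_inner"
  assumes "orthon e" "finite A"
  shows "(\<Sum>j\<in>A. c j *\<^sub>R e (Suc j)) \<bullet> e (Suc i) = (if i \<in> A then c i else 0)"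
proof -
  have "(\<Sum>j\<in>A. c j *\<^sub>R e (Suc j)) \<bullet> e (Suc i) = (\<Sum>j\<in>A. if j = i then c j else 0)"
    using assms(1) unfolding orthon_def by (simp add: inner_sum_left) (intro sum.cong refl, auto)
  also have "\<dots> = (if i \<in> A then c i else 0)" using assms(2) by simp
  finally show ?thesis .
qed

lemma bessel:
  fixes e :: "nat \<Rightarrow> 'h::real_inner"
  assumes "orthon e"
  shows "(\<Sum>j<n. (e (Suc j) \<bullet> u)\<^sup>2) \<le> (norm u)\<^sup>2"
proof -
  define p where "p = (\<Sum>j<n. (e (Suc j) \<bullet> u) *\<^sub>R e (Suc j))"
  have np: "(norm p)\<^sup>2 = (\<Sum>j<n. (e (Suc j) \<bullet> u)\<^sup>2)"
    unfolding p_def by (rule orth_fin_norm[OF assms]) simp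
  have up: "u \<bullet> p = (\<Sum>j<n. (e (Suc j) \<bullet> u)\<^sup>2)"
    unfolding p_def by (simp add: inner_sum_right power2_eq_square inner_commute)
  have "0 \<le> (norm (u - p))\<^sup>2" by simp
  also have "\<dots> = (norm u)\<^sup>2 - 2 * (u \<bullet> p) + (norm p)\<^sup>2"
    by (simp add: power2_norm_eq_inner inner_diff_left inner_diff_right inner_commute)
  finally show ?thesis using np up by simp
qed

lemma bessel_summable:
  fixes e :: "nat \<Rightarrow> 'h::real_inner"
  assumes "orthon e"
  shows "summable (\<lambda>j. (e (Suc j) \<bullet> u)\<^sup>2)" "(\<Sum>j. (e (Suc j) \<bullet> u)\<^sup>2) \<le> (norm u)\<^sup>2"
  using bessel[OF assms] by (auto intro!: summableI_nonneg_bounded suminf_le_const)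

lemma orth_summable:
  fixes e :: "nat \<Rightarrow> 'h::{real_inner,complete_space}"
  assumes "orthon e" "summable (\<lambda>j. (c j)\<^sup>2)"
  shows "summable (\<lambda>j. c j *\<^sub>R e (Suc j))"
proof -
  define s where "s n = (\<Sum>j<n. c j *\<^sub>R e (Suc j))" for n
  have diff: "norm (s n - s m) < \<epsilon>" if "m \<le> n" "(\<Sum>j\<in>{m..<n}. (c j)\<^sup>2) < \<epsilon>\<^sup>2" "\<epsilon> > 0" for m n \<epsilon>
  proof -
    have "s n - s m = (\<Sum>j\<in>{m..<n}. c j *\<^sub>R e (Suc j))"
      unfolding s_def using that(1) by (metis sum_diff_nat_ivl lessThan_atLeast0 zero_le)
    hence "(norm (s n - s m))\<^sup>2 < \<epsilon>\<^sup>2" using orth_fin_norm[OF assms(1)] that(2) by simp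
    thus ?thesis by (rule power_less_imp_less_base) (use that(3) in simp)
  qed
  have "Cauchy s"
  proof (rule metric_CauchyI)
    fix \<epsilon> :: real assume "\<epsilon> > 0"
    then obtain N where N: "\<forall>m\<ge>N. \<forall>n. norm (\<Sum>j\<in>{m..<n}. (c j)\<^sup>2) < \<epsilon>\<^sup>2"
      using assms(2) unfolding summable_Cauchy by (meson zero_less_power)
    show "\<exists>M. \<forall>m\<ge>M. \<forall>n\<ge>M. dist (s m) (s n) < \<epsilon>"
    proof (intro exI allI impI)
      fix m n assume "m \<ge> N" "n \<ge> N"
      show "dist (s m) (s n) < \<epsilon>"
      proof (cases "m \<le> n")
        case True thus ?thesis using diff[of m n \<epsilon>] N[rule_format, of m n] \<open>m \<ge> N\<close> \<open>\<epsilon>>0\<close>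
          by (simp add: dist_norm norm_minus_commute)
      next
        case False thus ?thesis using diff[of n m \<epsilon>] N[rule_format, of n m] \<open>n \<ge> N\<close> \<open>\<epsilon>>0\<close>
          by (simp add: dist_norm)
      qed
    qed
  qed
  then obtain l where "s \<longlonglongrightarrow> l" using Cauchy_convergent_iff convergent_def by blast
  thus ?thesis unfolding summable_def sums_def s_def by blast
qed

lemma lam_anti:
  assumes "\<forall>j\<ge>1. lam (Suc j) \<le> (lam j::real)" "1 \<le> i" "i \<le> j"
  shows "lam j \<le> lam i"
  using assms(3)
proof (induction j rule: dec_induct)
  case base show ?case by simp
next
  case (step n) thus ?case using assms(1,2) by (meson order_trans)
qed

lemma spec_norm:
  fixes e :: "nat \<Rightarrow> 'h::{real_inner,complete_space}"
  assumes on: "orthon e" and mono: "\<forall>j\<ge>1. lam (Suc j) \<le> lam j" and nn: "\<forall>j\<ge>1. lam j \<ge> 0"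
    and r: "r > 0" and z: "\<forall>i\<in>{1..m}. e i \<bullet> spec_pow lam e r u = 0"
  shows "norm (spec_pow lam e r u) \<le> lam (m+1) powr r * norm u"
proof -
  define c where "c j = lam (Suc j) powr r * (e (Suc j) \<bullet> u)" for j
  define L where "L = lam (m+1) powr r"
  have L0: "L \<ge> 0" unfolding L_def by simp
  have cb: "norm ((c j)\<^sup>2) \<le> (lam 1 powr r)\<^sup>2 * (e (Suc j) \<bullet> u)\<^sup>2" for j
  proof -
    have "lam (Suc j) \<le> lam 1" using lam_anti[OF mono, of 1 "Suc j"] by simp
    hence "lam (Suc j) powr r \<le> lam 1 powr r" using nn r by (intro powr_mono2) auto
    hence "(lam (Suc j) powr r)\<^sup>2 \<le> (lam 1 powr r)\<^sup>2" by (intro power_mono) auto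
    thus ?thesis unfolding c_def by (simp add: power_mult_distrib mult_right_mono)
  qed
  have "summable (\<lambda>j. (c j)\<^sup>2)"
    by (rule summable_comparison_test[OF _ summable_mult[OF bessel_summable(1)[OF on]]]) (use cb in auto)
  hence sm: "summable (\<lambda>j. c j *\<^sub>R e (Suc j))" by (rule orth_summable[OF on])
  define \<delta> where "\<delta> = spec_pow lam e r u"
  have sums: "(\<lambda>j. c j *\<^sub>R e (Suc j)) sums \<delta>"
    using sm unfolding \<delta>_def spec_pow_def c_def by (simp add: summable_sums)
  have coef: "e (Suc i) \<bullet> \<delta> = c i" for i
  proof -
    have "(\<lambda>j. e (Suc i) \<bullet> (c j *\<^sub>R e (Suc j))) sums (e (Suc i) \<bullet> \<delta>)"
      by (rule bounded_linear.sums[OF bounded_linear_inner_right sums])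
    moreover have "(\<lambda>j. e (Suc i) \<bullet> (c j *\<^sub>R e (Suc j))) = (\<lambda>j. if j = i then c j else 0)"
      using on unfolding orthon_def by (simp add: fun_eq_iff)
    ultimately have "(\<lambda>j. if j = i then c j else 0) sums (e (Suc i) \<bullet> \<delta>)" by simp
    from sums_unique2[OF this sums_single] show ?thesis .
  qed
  have c0: "c j = 0" if "j < m" for j
  proof -
    have "Suc j \<in> {1..m}" using that by simp
    hence "e (Suc j) \<bullet> \<delta> = 0" using z unfolding \<delta>_def by blast
    thus ?thesis using coef[of j] by simp
  qed
  have cb2: "(c j)\<^sup>2 \<le> L\<^sup>2 * (e (Suc j) \<bullet> u)\<^sup>2" for j
  proof (cases "j < m")
    case True thus ?thesis using c0 by simp
  next
    case False
    have "lam (Suc j) \<le> lam (Suc m)" using lam_anti[OF mono, of "Suc m" "Suc j"] False by simp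
    hence "lam (Suc j) powr r \<le> L" unfolding L_def using nn r by (intro powr_mono2) auto
    hence "(lam (Suc j) powr r)\<^sup>2 \<le> L\<^sup>2" by (intro power_mono) auto
    thus ?thesis unfolding c_def by (simp add: power_mult_distrib mult_right_mono)
  qed
  define s where "s n = (\<Sum>j<n. c j *\<^sub>R e (Suc j))" for n
  have "s \<longlonglongrightarrow> \<delta>" using sums unfolding sums_def s_def .
  hence lim: "(\<lambda>n. norm (s n)) \<longlonglongrightarrow> norm \<delta>" by (rule tendsto_norm)
  have bnd: "norm (s n) \<le> L * norm u" for n
  proof -
    have "(norm (s n))\<^sup>2 = (\<Sum>j<n. (c j)\<^sup>2)" unfolding s_def by (rule orth_fin_norm[OF on]) simp
    also have "\<dots> \<le> (\<Sum>j<n. L\<^sup>2 * (e (Suc j) \<bullet> u)\<^sup>2)" by (intro sum_mono cb2)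
    also have "\<dots> = L\<^sup>2 * (\<Sum>j<n. (e (Suc j) \<bullet> u)\<^sup>2)" by (simp add: sum_distrib_left)
    also have "\<dots> \<le> L\<^sup>2 * (norm u)\<^sup>2" by (rule mult_left_mono[OF bessel[OF on]]) simp
    also have "\<dots> = (L * norm u)\<^sup>2" by (simp add: power_mult_distrib)
    finally show ?thesis by (rule power2_le_imp_le) (use L0 in simp)
  qed
  have "norm \<delta> \<le> L * norm u" using LIMSEQ_le_const2[OF lim] bnd by blast
  thus ?thesis unfolding \<delta>_def L_def .
qed

lemma orth_proj_zero:
  fixes e :: "nat \<Rightarrow> 'h::real_inner"
  assumes on: "orthon e" and z: "orth_proj (span (e ` {1..m})) x = 0" and i: "i \<in> {1..m}"
  shows "e i \<bullet> x = 0"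
proof -
  define V where "V = span (e ` {1..m})"
  define p0 where "p0 = (\<Sum>k\<in>{1..m}. (x \<bullet> e k) *\<^sub>R e k)"
  have p0V: "p0 \<in> V" unfolding p0_def V_def by (intro span_sum span_mul span_base) auto
  have gen: "(x - p0) \<bullet> e k = 0" if "k \<in> {1..m}" for k
  proof -
    have "p0 \<bullet> e k = (\<Sum>l\<in>{1..m}. (x \<bullet> e l) * (e l \<bullet> e k))"
      unfolding p0_def by (simp add: inner_sum_left)
    also have "\<dots> = (\<Sum>l\<in>{1..m}. if l = k then x \<bullet> e l else 0)"
      using on that unfolding orthon_def by (intro sum.cong refl) auto
    also have "\<dots> = x \<bullet> e k" using that by simp
    finally show ?thesis by (simp add: inner_diff_left)
  qed
  have orth: "(x - p0) \<bullet> v = 0" if "v \<in> V" for v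
  proof -
    have "orthogonal (x - p0) v"
      by (rule orthogonal_to_span) (use that gen in \<open>auto simp: V_def orthogonal_def\<close>)
    thus ?thesis by (simp add: orthogonal_def)
  qed
  have uniq: "p = p0" if "p \<in> V" "\<forall>v\<in>V. (x - p) \<bullet> v = 0" for p
  proof -
    have dV: "p0 - p \<in> V" using p0V that(1) unfolding V_def by (rule span_diff)
    have "(p0 - p) \<bullet> (p0 - p) = (x - p) \<bullet> (p0 - p) - (x - p0) \<bullet> (p0 - p)"
      by (simp add: inner_diff_left)
    also have "\<dots> = 0" using that(2) orth dV by simp
    finally show ?thesis by simp
  qed
  have "orth_proj V x = p0" unfolding orth_proj_def
  proof (rule the_equality)
    show "p0 \<in> V \<and> (\<forall>v\<in>V. (x - p0) \<bullet> v = 0)" using p0V orth by blast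
  next
    fix p assume "p \<in> V \<and> (\<forall>v\<in>V. (x - p) \<bullet> v = 0)"
    thus "p = p0" using uniq by blast
  qed
  hence "p0 = 0" using z V_def by simp
  thus ?thesis using gen[OF i] by (simp add: inner_commute)
qed




lemma alg1:
  fixes p \<pi> J1 J0 s1 s0 :: real
  assumes p: "0 < p" "p < 1" and pi: "\<pi> > 0" and J: "J1 + J0 = p * \<pi>"
    and s1: "s1 = J1 / (p * \<pi>)" and s0: "s0 = J0 / ((1 - p) * \<pi>)" and J0: "J0 \<ge> 0"
  shows "p * \<pi> - J1 + J0 \<le> \<pi> * (1 - s1 + s0) / 2" "0 \<le> 1 - s1 + s0"
    "p = p * s1 + (1 - p) * s0"
proof -
  have J1: "J1 = p * \<pi> - J0" using J by simp
  have x: "1 - s1 + s0 = J0 / (p * (1 - p) * \<pi>)"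
    using p pi unfolding s1 s0 J1 by (simp add: field_simps)
  have q: "4 * (p * (1 - p)) \<le> 1" using zero_le_power2[of "2 * p - 1"] by (simp add: algebra_simps power2_eq_square)
  have pp: "p * (1 - p) > 0" using p by simp
  have "p * \<pi> - J1 + J0 = 2 * J0" using J1 by simp
  also have "\<dots> \<le> J0 / (2 * (p * (1 - p)))"
  proof -
    have "J0 * (4 * (p * (1 - p))) \<le> J0 * 1" using mult_left_mono[OF q J0] .
    hence "2 * J0 * (2 * (p * (1 - p))) \<le> J0" by (simp add: algebra_simps)
    thus ?thesis using pp by (simp add: le_divide_eq)
  qed
  also have "\<dots> = \<pi> * (1 - s1 + s0) / 2"
  proof -
    have gen: "\<pi> * (J0 / (q * \<pi>)) / 2 = J0 / (2 * q)" if "q > 0" for q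
      using that pi by (simp add: field_simps)
    show ?thesis unfolding x using gen[OF pp] by simp
  qed
  finally show "p * \<pi> - J1 + J0 \<le> \<pi> * (1 - s1 + s0) / 2" .
  show "0 \<le> 1 - s1 + s0" using x J0 pp pi by simp
  have a1: "p * s1 = J1 / \<pi>" unfolding s1 using p pi by (simp add: field_simps)
  have a0: "(1 - p) * s0 = J0 / \<pi>" unfolding s0 using p pi by (simp add: field_simps)
  have "p * s1 + (1 - p) * s0 = (J1 + J0) / \<pi>" unfolding a1 a0 by (simp add: add_divide_distrib)
  thus "p = p * s1 + (1 - p) * s0" using J pi by simp
qed

lemma alg2:
  fixes pa pb s1a s0a s1b s0b :: real
  assumes "pa = pa * s1a + (1 - pa) * s0a" "pb = pb * s1b + (1 - pb) * s0b"
  shows "(pa - pb) * (1 - s1a + s0a) = pb * (s1a - s1b) + (1 - pb) * (s0a - s0b)"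
    "(pa - pb) * (1 - s1b + s0b) = pa * (s1a - s1b) + (1 - pa) * (s0a - s0b)"
  using assms by (simp_all add: algebra_simps)

lemma alg3:
  fixes p d1 d0 W n1 n0 :: real
  assumes "0 < p" "p < 1" "\<bar>d1\<bar> \<le> W * n1" "\<bar>d0\<bar> \<le> W * n0"
  shows "\<bar>p * d1 + (1 - p) * d0\<bar> \<le> W * (p * n1 + (1 - p) * n0)"
proof -
  have "\<bar>p * d1 + (1 - p) * d0\<bar> \<le> p * \<bar>d1\<bar> + (1 - p) * \<bar>d0\<bar>"
  proof -
    have "\<bar>p * d1 + (1 - p) * d0\<bar> \<le> \<bar>p * d1\<bar> + \<bar>(1 - p) * d0\<bar>" by (rule abs_triangle_ineq)
    also have "\<dots> = p * \<bar>d1\<bar> + (1 - p) * \<bar>d0\<bar>" using assms(1,2) by (simp add: abs_mult)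
    finally show ?thesis .
  qed
  also have "\<dots> \<le> p * (W * n1) + (1 - p) * (W * n0)"
    using assms by (intro add_mono mult_left_mono) auto
  finally show ?thesis by (simp add: algebra_simps)
qed

lemma alg4:
  fixes D xa xb \<pi>a \<pi>b K Ea Eb :: real
  assumes "D \<noteq> 0" "\<pi>a \<ge> 0" "\<pi>b \<ge> 0" "\<pi>a + \<pi>b = 1" "xa \<ge> 0" "xb \<ge> 0"
    "Ea \<le> \<pi>a * xa / 2" "Eb \<le> \<pi>b * xb / 2"
    "\<bar>D * xa\<bar> \<le> K" "\<bar>D * xb\<bar> \<le> K"
  shows "Ea + Eb \<le> K / (2 * \<bar>D\<bar>)"
proof -
  have d: "\<bar>D\<bar> > 0" using assms by simp
  have "xa \<le> K / \<bar>D\<bar>" using assms(5,9) d by (simp add: abs_mult le_divide_eq mult.commute)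
  moreover have "xb \<le> K / \<bar>D\<bar>" using assms(6,10) d by (simp add: abs_mult le_divide_eq mult.commute)
  ultimately have "\<pi>a * xa + \<pi>b * xb \<le> \<pi>a * (K / \<bar>D\<bar>) + \<pi>b * (K / \<bar>D\<bar>)"
    using assms(2,3) by (intro add_mono mult_left_mono) auto
  also have "\<dots> = (\<pi>a + \<pi>b) * (K / \<bar>D\<bar>)" by (simp only: distrib_right)
  also have "\<dots> = K / \<bar>D\<bar>" using assms(4) by simp
  finally show ?thesis using assms(7,8) by (simp add: field_simps)
qed

lemma alg5:
  fixes p n1 n0 L :: real
  assumes "0 < p" "p < 1" "n1 \<le> L" "n0 \<le> L"
  shows "p * n1 + (1 - p) * n0 \<le> L"
proof -
  have "p * n1 + (1 - p) * n0 \<le> p * L + (1 - p) * L"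
    using assms by (intro add_mono mult_left_mono) auto
  thus ?thesis by (simp add: algebra_simps)
qed




theorem theorem8:
  fixes M :: "'o measure" and MX :: "'x measure"
    and X :: "'o \<Rightarrow> 'x" and Y :: "'o \<Rightarrow> real" and G :: "'o \<Rightarrow> 'g" and a b :: 'g
    and p :: "'g \<Rightarrow> real"
    and k :: "'x \<Rightarrow> 'x \<Rightarrow> real" and \<phi> :: "'x \<Rightarrow> 'h::{real_inner,complete_space}" and \<kappa> :: real
    and \<mu> :: 'h and Sig :: "'h \<Rightarrow> 'h" and lam :: "nat \<Rightarrow> real" and e :: "nat \<Rightarrow> 'h"
    and \<alpha> c\<^sub>1 c\<^sub>2 r R W :: real
    and muYG :: "real \<Rightarrow> 'g \<Rightarrow> 'h" and u :: "real \<Rightarrow> 'h" and w :: 'h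
  defines "EQf \<equiv> \<lambda>f::'x \<Rightarrow> real. (cond_exp_ev M {\<omega>\<in>space M. G \<omega> = a} (\<lambda>\<omega>. f (X \<omega>))
                                 + cond_exp_ev M {\<omega>\<in>space M. G \<omega> = b} (\<lambda>\<omega>. f (X \<omega>))) / 2"
      and "\<delta> \<equiv> \<lambda>y. muYG y a - muYG y b"
      and "S \<equiv> \<lambda>\<omega>. w \<bullet> \<phi> (X \<omega>)"
      and "\<Delta>p \<equiv> p a - p b"
  assumes M: "prob_space M"
      and X_meas: "X \<in> measurable M MX"
      and Y_meas: "Y \<in> borel_measurable M" and Y_vals: "\<forall>\<omega>\<in>space M. Y \<omega> \<in> {0, 1}"
      and G_meas: "G \<in> measurable M (count_space UNIV)"
      and ab: "a \<noteq> b" and G_vals: "\<forall>\<omega>\<in>space M. G \<omega> \<in> {a, b}"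
      and G_pos: "\<forall>g\<in>{a, b}. measure M {\<omega>\<in>space M. G \<omega> = g} > 0"
      and p_def: "\<forall>g\<in>{a, b}. p g = cond_prob_ev M {\<omega>\<in>space M. G \<omega> = g} {\<omega>\<in>space M. Y \<omega> = 1}"
      and p_range: "\<forall>g\<in>{a, b}. 0 < p g \<and> p g < 1"
      and Dp: "\<Delta>p \<noteq> 0"
      \<comment> \<open>kernel, RKHS and feature map\<close>
      and k_feat: "\<forall>x y. k x y = \<phi> x \<bullet> \<phi> y"
      and k_meas: "(\<lambda>(x, y). k x y) \<in> borel_measurable (MX \<Otimes>\<^sub>M MX)"
      and k_pd: "\<forall>n (c :: nat \<Rightarrow> real) (xs :: nat \<Rightarrow> 'x).
                   (\<Sum>i<n. \<Sum>j<n. c i * c j * k (xs i) (xs j)) \<ge> 0"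
      and rkhs: "closure (span (range \<phi>)) = UNIV"
      and phi_meas: "\<forall>h. (\<lambda>x. \<phi> x \<bullet> h) \<in> borel_measurable MX"
      and k_bdd: "\<forall>x. k x x \<le> \<kappa>\<^sup>2"
      \<comment> \<open>mean embedding and covariance operator of Q = (P_a + P_b)/2\<close>
      and mu_def: "\<forall>h. \<mu> \<bullet> h = EQf (\<lambda>x. \<phi> x \<bullet> h)"
      and Sig_def: "\<forall>f g. Sig f \<bullet> g = EQf (\<lambda>x. ((\<phi> x - \<mu>) \<bullet> f) * ((\<phi> x - \<mu>) \<bullet> g))"
      and Sig_expand: "\<forall>f. (\<lambda>j. (lam (Suc j) * (e (Suc j) \<bullet> f)) *\<^sub>R e (Suc j)) sums Sig f"
      and e_orthonormal: "\<forall>i\<ge>1. \<forall>j\<ge>1. e i \<bullet> e j = (if i = j then 1 else 0)"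
      and lam_mono: "\<forall>j\<ge>1. lam (Suc j) \<le> lam j" and lam_nonneg: "\<forall>j\<ge>1. lam j \<ge> 0"
      and \<alpha>: "\<alpha> > 1" and c1: "c\<^sub>1 > 0" and c2: "c\<^sub>2 > 0"
      and decay: "\<forall>j\<ge>1. c\<^sub>1 * real j powr (-\<alpha>) \<le> lam j \<and> lam j \<le> c\<^sub>2 * real j powr (-\<alpha>)"
      \<comment> \<open>class-conditional mean embeddings and source condition\<close>
      and muYG_def: "\<forall>y\<in>{0, 1}. \<forall>g\<in>{a, b}. \<forall>h. muYG y g \<bullet> h =
                        cond_exp_ev M {\<omega>\<in>space M. Y \<omega> = y \<and> G \<omega> = g} (\<lambda>\<omega>. \<phi> (X \<omega>) \<bullet> h)"
      and r: "r > 0" and R: "R > 0"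
      and source: "\<forall>y\<in>{0, 1}. \<delta> y = spec_pow lam e r (u y) \<and> norm (u y) \<le> R"
      \<comment> \<open>the score S\<close>
      and S_meas: "S \<in> borel_measurable M"
      and S_range: "AE \<omega> in M. 0 \<le> S \<omega> \<and> S \<omega> \<le> 1"
      and w_bdd: "norm w \<le> W"
      and S_calib: "\<forall>g\<in>{a, b}. cond_exp_ev M {\<omega>\<in>space M. G \<omega> = g} S = p g"
  shows "(\<forall>m::nat. (\<forall>y\<in>{0, 1}. orth_proj (span (e ` {1..m})) (\<delta> y) = 0) \<longrightarrow>
            (let \<rho> = max (p a * norm (\<delta> 1) + (1 - p a) * norm (\<delta> 0))
                          (p b * norm (\<delta> 1) + (1 - p b) * norm (\<delta> 0))
             in \<rho> \<le> R * lam (m + 1) powr r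
                \<and> c\<^sub>1 powr r * (R * real (m + 1) powr (-\<alpha> * r)) \<le> R * lam (m + 1) powr r
                \<and> R * lam (m + 1) powr r \<le> c\<^sub>2 powr r * (R * real (m + 1) powr (-\<alpha> * r))
                \<and> (\<forall>t. 0 < t \<and> t \<le> 1 \<longrightarrow>
                     measure M {\<omega>\<in>space M. \<bar>S \<omega> - Y \<omega>\<bar> > t}
                       \<le> W * R * lam (m + 1) powr r / (\<bar>\<Delta>p\<bar> * t))))
         \<and> ((\<forall>N. \<exists>m\<ge>N. \<forall>y\<in>{0, 1}. orth_proj (span (e ` {1..m})) (\<delta> y) = 0)
              \<longrightarrow> (AE \<omega> in M. S \<omega> = Y \<omega>))"
proof -
  interpret P: prob_space M by (rule M)
  note [measurable] = Y_meas G_meas S_meas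
  define A where "A g = {\<omega>\<in>space M. G \<omega> = g}" for g
  define B where "B y g = {\<omega>\<in>space M. Y \<omega> = y \<and> G \<omega> = g}" for y g
  have A_sets: "A g \<in> sets M" for g
  proof -
    have "A g = G -` {g} \<inter> space M" unfolding A_def by auto
    thus ?thesis using measurable_sets[OF G_meas, of "{g}"] by simp
  qed
  have Yset: "{\<omega>\<in>space M. Y \<omega> = y} \<in> sets M" for y by measurable
  have B_sets[measurable]: "B y g \<in> sets M" for y g
  proof -
    have "B y g = {\<omega>\<in>space M. Y \<omega> = y} \<inter> A g" unfolding A_def B_def by auto
    thus ?thesis using Yset A_sets by auto
  qed
  have B_sub: "B y g \<inter> space M = B y g" for y g unfolding B_def by auto
  define \<pi> where "\<pi> g = measure M (A g)" for g
  have \<pi>pos: "\<pi> g > 0" if "g \<in> {a, b}" for g using G_pos that unfolding \<pi>_def A_def by auto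
  have \<pi>sum: "\<pi> a + \<pi> b = 1"
  proof -
    have u: "A a \<union> A b = space M" using G_vals unfolding A_def by auto
    have i: "A a \<inter> A b = {}" using ab unfolding A_def by auto
    have "measure M (A a \<union> A b) = \<pi> a + \<pi> b"
      unfolding \<pi>_def by (rule P.finite_measure_Union[OF A_sets A_sets i])
    thus ?thesis unfolding u using P.prob_space by simp
  qed
  have mB1: "measure M (B 1 g) = p g * \<pi> g" if g: "g \<in> {a, b}" for g
  proof -
    have eq: "A g \<inter> {\<omega>\<in>space M. Y \<omega> = 1} = B 1 g" unfolding A_def B_def by auto
    have "p g = cond_prob_ev M (A g) {\<omega>\<in>space M. Y \<omega> = 1}" using p_def g unfolding A_def by auto
    also have "\<dots> = measure M (B 1 g) / \<pi> g" unfolding cond_prob_ev_def \<pi>_def eq ..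
    finally show ?thesis using \<pi>pos[OF g] by (simp add: field_simps)
  qed
  have mB0: "measure M (B 0 g) = (1 - p g) * \<pi> g" if g: "g \<in> {a, b}" for g
  proof -
    have "A g = B 0 g \<union> B 1 g" using Y_vals unfolding A_def B_def by auto
    moreover have "B 0 g \<inter> B 1 g = {}" unfolding B_def by auto
    ultimately have "\<pi> g = measure M (B 0 g) + measure M (B 1 g)"
      unfolding \<pi>_def by (simp add: P.finite_measure_Union[OF B_sets B_sets])
    thus ?thesis using mB1[OF g] by (simp add: algebra_simps)
  qed
  have intS: "integrable M S"
  proof (rule P.integrable_const_bound[where B=1])
    show "AE \<omega> in M. norm (S \<omega>) \<le> 1" using S_range by eventually_elim auto
  qed simp
  have intSI: "integrable M (\<lambda>\<omega>. indicator C \<omega> * S \<omega>)" if "C \<in> sets M" for C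
    using integrable_real_mult_indicator[OF that intS] by (simp add: mult.commute)
  define J where "J y g = (\<integral>\<omega>. indicator (B y g) \<omega> * S \<omega> \<partial>M)" for y g
  define s where "s y g = muYG y g \<bullet> w" for y g
  have Sfun: "(\<lambda>\<omega>. \<phi> (X \<omega>) \<bullet> w) = S" unfolding S_def by (simp add: inner_commute)
  have s_eq: "s y g = J y g / measure M (B y g)" if "y \<in> {0, 1}" "g \<in> {a, b}" for y g
  proof -
    have "s y g = cond_exp_ev M (B y g) (\<lambda>\<omega>. \<phi> (X \<omega>) \<bullet> w)"
      using muYG_def that unfolding s_def B_def by blast
    thus ?thesis unfolding Sfun cond_exp_ev_def J_def .
  qed
  have Jsum: "J 1 g + J 0 g = p g * \<pi> g" if g: "g \<in> {a, b}" for g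
  proof -
    have "cond_exp_ev M (A g) S = p g" using S_calib g unfolding A_def by auto
    hence "(\<integral>\<omega>. indicator (A g) \<omega> * S \<omega> \<partial>M) = p g * \<pi> g"
      unfolding cond_exp_ev_def \<pi>_def[symmetric] using \<pi>pos[OF g] by (simp add: divide_eq_eq)
    moreover have "(\<integral>\<omega>. indicator (A g) \<omega> * S \<omega> \<partial>M) = J 1 g + J 0 g"
    proof -
      have "(\<integral>\<omega>. indicator (A g) \<omega> * S \<omega> \<partial>M)
          = (\<integral>\<omega>. indicator (B 1 g) \<omega> * S \<omega> + indicator (B 0 g) \<omega> * S \<omega> \<partial>M)"
        by (rule Bochner_Integration.integral_cong) (use Y_vals in \<open>auto simp: A_def B_def indicator_def\<close>)
      also have "\<dots> = J 1 g + J 0 g" unfolding J_def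
        by (rule Bochner_Integration.integral_add[OF intSI[OF B_sets] intSI[OF B_sets]])
      finally show ?thesis .
    qed
    ultimately show ?thesis by simp
  qed
  have J0nn: "J 0 g \<ge> 0" for g
  proof -
    have "AE \<omega> in M. 0 \<le> indicator (B 0 g) \<omega> * S \<omega>" using S_range by eventually_elim (simp add: indicator_def)
    thus ?thesis unfolding J_def by (rule integral_nonneg_AE)
  qed
  have pa: "0 < p a" "p a < 1" and pb: "0 < p b" "p b < 1" using p_range by auto
  have s1: "s 1 g = J 1 g / (p g * \<pi> g)" if "g \<in> {a, b}" for g using s_eq[of 1 g] mB1[of g] that by simp
  have s0: "s 0 g = J 0 g / ((1 - p g) * \<pi> g)" if "g \<in> {a, b}" for g using s_eq[of 0 g] mB0[of g] that by simp
  have ga: "a \<in> {a, b}" and gb: "b \<in> {a, b}" by auto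
  note A1 = alg1[OF pa \<pi>pos[OF ga] Jsum[OF ga] s1[OF ga] s0[OF ga] J0nn[of a]]
  note B1 = alg1[OF pb \<pi>pos[OF gb] Jsum[OF gb] s1[OF gb] s0[OF gb] J0nn[of b]]
  note A2 = alg2[OF A1(3)[simplified] B1(3)[simplified]]
  have W0: "W \<ge> 0" using w_bdd norm_ge_zero order_trans by blast
  have dbound: "\<bar>s y a - s y b\<bar> \<le> W * norm (\<delta> y)" for y
  proof -
    have "s y a - s y b = \<delta> y \<bullet> w" unfolding s_def \<delta>_def by (simp add: inner_diff_left)
    also have "\<bar>\<dots>\<bar> \<le> norm (\<delta> y) * norm w" by (rule Cauchy_Schwarz_ineq2)
    also have "\<dots> \<le> norm (\<delta> y) * W" using w_bdd by (intro mult_left_mono) auto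
    finally show ?thesis by (simp add: mult.commute)
  qed
  define \<rho> where "\<rho> = max (p a * norm (\<delta> 1) + (1 - p a) * norm (\<delta> 0))
                          (p b * norm (\<delta> 1) + (1 - p b) * norm (\<delta> 0))"
  have \<rho>0: "\<rho> \<ge> 0" unfolding \<rho>_def using pa by (intro max.coboundedI1 add_nonneg_nonneg) auto
  have ka: "\<bar>p b * (s 1 a - s 1 b) + (1 - p b) * (s 0 a - s 0 b)\<bar> \<le> W * \<rho>"
  proof -
    have "\<bar>p b * (s 1 a - s 1 b) + (1 - p b) * (s 0 a - s 0 b)\<bar> \<le> W * (p b * norm (\<delta> 1) + (1 - p b) * norm (\<delta> 0))"
      by (rule alg3[OF pb dbound dbound])
    also have "\<dots> \<le> W * \<rho>" unfolding \<rho>_def by (intro mult_left_mono W0 max.cobounded2)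
    finally show ?thesis .
  qed
  have kb: "\<bar>p a * (s 1 a - s 1 b) + (1 - p a) * (s 0 a - s 0 b)\<bar> \<le> W * \<rho>"
  proof -
    have "\<bar>p a * (s 1 a - s 1 b) + (1 - p a) * (s 0 a - s 0 b)\<bar> \<le> W * (p a * norm (\<delta> 1) + (1 - p a) * norm (\<delta> 0))"
      by (rule alg3[OF pa dbound dbound])
    also have "\<dots> \<le> W * \<rho>" unfolding \<rho>_def by (intro mult_left_mono W0 max.cobounded1)
    finally show ?thesis .
  qed
  have EE: "(p a * \<pi> a - J 1 a + J 0 a) + (p b * \<pi> b - J 1 b + J 0 b) \<le> W * \<rho> / (2 * \<bar>\<Delta>p\<bar>)"
    unfolding \<Delta>p_def
  proof (rule alg4[OF _ _ _ \<pi>sum A1(2) B1(2) A1(1) B1(1)])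
    show "p a - p b \<noteq> 0" using Dp unfolding \<Delta>p_def .
    show "0 \<le> \<pi> a" "0 \<le> \<pi> b" using \<pi>pos[of a] \<pi>pos[of b] by auto
    show "\<bar>(p a - p b) * (1 - s 1 a + s 0 a)\<bar> \<le> W * \<rho>" unfolding A2(1) by (rule ka)
    show "\<bar>(p a - p b) * (1 - s 1 b + s 0 b)\<bar> \<le> W * \<rho>" unfolding A2(2) by (rule kb)
  qed
  define D where "D \<omega> = \<bar>S \<omega> - Y \<omega>\<bar>" for \<omega>
  have D_meas[measurable]: "D \<in> borel_measurable M" unfolding D_def by measurable
  have intD: "integrable M D"
  proof (rule P.integrable_const_bound[where B=1])
    show "AE \<omega> in M. norm (D \<omega>) \<le> 1" using S_range AE_space
      by eventually_elim (use Y_vals in \<open>auto simp: D_def\<close>)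
  qed simp
  have Dnn: "AE \<omega> in M. 0 \<le> D \<omega>" unfolding D_def by simp
  define F where "F g \<omega> = indicator (B 1 g) \<omega> - indicator (B 1 g) \<omega> * S \<omega> + indicator (B 0 g) \<omega> * S \<omega>" for g \<omega>
  have intI: "integrable M (\<lambda>\<omega>. indicator (B y g) \<omega> :: real)" for y g
    using B_sets by (intro integrable_real_indicator) (auto simp: P.emeasure_finite less_top[symmetric])
  have intF: "integrable M (F g)" for g
    unfolding F_def by (intro Bochner_Integration.integrable_add Bochner_Integration.integrable_diff intI intSI B_sets)
  have intFg: "(\<integral>\<omega>. F g \<omega> \<partial>M) = p g * \<pi> g - J 1 g + J 0 g" if g: "g \<in> {a, b}" for g
  proof -
    have "(\<integral>\<omega>. F g \<omega> \<partial>M) = (\<integral>\<omega>. indicator (B 1 g) \<omega> - indicator (B 1 g) \<omega> * S \<omega> \<partial>M) + J 0 g"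
      unfolding F_def J_def
      by (rule Bochner_Integration.integral_add) (intro Bochner_Integration.integrable_diff intI intSI B_sets, intro intSI B_sets)
    also have "(\<integral>\<omega>. indicator (B 1 g) \<omega> - indicator (B 1 g) \<omega> * S \<omega> \<partial>M) = measure M (B 1 g) - J 1 g"
      unfolding J_def
      by (subst Bochner_Integration.integral_diff[OF intI intSI[OF B_sets]]) (simp add: B_sub)
    finally show ?thesis using mB1[OF g] by simp
  qed
  have ED: "(\<integral>\<omega>. D \<omega> \<partial>M) = (p a * \<pi> a - J 1 a + J 0 a) + (p b * \<pi> b - J 1 b + J 0 b)"
  proof -
    have "(\<integral>\<omega>. D \<omega> \<partial>M) = (\<integral>\<omega>. F a \<omega> + F b \<omega> \<partial>M)"
    proof (rule integral_cong_AE)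
      show "D \<in> borel_measurable M" by measurable
      show "(\<lambda>\<omega>. F a \<omega> + F b \<omega>) \<in> borel_measurable M"
        using intF by (intro borel_measurable_add) auto
      show "AE \<omega> in M. D \<omega> = F a \<omega> + F b \<omega>" using S_range AE_space
      proof eventually_elim
        case (elim \<omega>)
        have "Y \<omega> = 0 \<or> Y \<omega> = 1" "G \<omega> = a \<or> G \<omega> = b" using Y_vals G_vals elim by auto
        thus ?case using elim ab by (auto simp: D_def F_def B_def indicator_def)
      qed
    qed
    also have "\<dots> = (\<integral>\<omega>. F a \<omega> \<partial>M) + (\<integral>\<omega>. F b \<omega> \<partial>M)"
      by (rule Bochner_Integration.integral_add[OF intF intF])
    finally show ?thesis using intFg[of a] intFg[of b] by simp
  qed
  have EDb: "(\<integral>\<omega>. D \<omega> \<partial>M) \<le> W * \<rho> / (2 * \<bar>\<Delta>p\<bar>)" using ED EE by simp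
  have on: "orthon e" using e_orthonormal unfolding orthon_def .
  have part1: "\<rho> \<le> R * lam (m + 1) powr r
                \<and> c\<^sub>1 powr r * (R * real (m + 1) powr (-\<alpha> * r)) \<le> R * lam (m + 1) powr r
                \<and> R * lam (m + 1) powr r \<le> c\<^sub>2 powr r * (R * real (m + 1) powr (-\<alpha> * r))
                \<and> (\<forall>t. 0 < t \<and> t \<le> 1 \<longrightarrow>
                     measure M {\<omega>\<in>space M. \<bar>S \<omega> - Y \<omega>\<bar> > t}
                       \<le> W * R * lam (m + 1) powr r / (\<bar>\<Delta>p\<bar> * t))"
    if hm: "\<forall>y\<in>{0, 1}. orth_proj (span (e ` {1..m})) (\<delta> y) = 0" for m
  proof -
    have nd: "norm (\<delta> y) \<le> R * lam (m + 1) powr r" if y: "y \<in> {0, 1}" for y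
    proof -
      have z: "\<forall>i\<in>{1..m}. e i \<bullet> spec_pow lam e r (u y) = 0"
        using orth_proj_zero[OF on hm[rule_format, OF y]] source y by auto
      have "norm (\<delta> y) \<le> lam (m + 1) powr r * norm (u y)"
        using spec_norm[OF on lam_mono lam_nonneg r z] source y by auto
      also have "\<dots> \<le> lam (m + 1) powr r * R" using source y by (intro mult_left_mono) auto
      finally show ?thesis by (simp add: mult.commute)
    qed
    have r1: "\<rho> \<le> R * lam (m + 1) powr r"
      unfolding \<rho>_def using alg5[OF pa nd nd] alg5[OF pb nd nd] by simp
    have dec: "c\<^sub>1 * real (m + 1) powr (-\<alpha>) \<le> lam (m + 1)" "lam (m + 1) \<le> c\<^sub>2 * real (m + 1) powr (-\<alpha>)"
      using decay by auto
    have pw: "(c * real (m + 1) powr (-\<alpha>)) powr r = c powr r * real (m + 1) powr (-\<alpha> * r)" if "c > 0" for c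
      using that by (simp add: powr_mult powr_powr)
    have r2: "c\<^sub>1 powr r * (R * real (m + 1) powr (-\<alpha> * r)) \<le> R * lam (m + 1) powr r"
    proof -
      have "(c\<^sub>1 * real (m + 1) powr (-\<alpha>)) powr r \<le> lam (m + 1) powr r"
        using dec(1) c1 r by (intro powr_mono2) auto
      thus ?thesis using pw[OF c1] R by (simp add: algebra_simps)
    qed
    have r3: "R * lam (m + 1) powr r \<le> c\<^sub>2 powr r * (R * real (m + 1) powr (-\<alpha> * r))"
    proof -
      have "lam (m + 1) powr r \<le> (c\<^sub>2 * real (m + 1) powr (-\<alpha>)) powr r"
        using dec(2) lam_nonneg r by (intro powr_mono2) auto
      thus ?thesis using pw[OF c2] R by (simp add: algebra_simps)
    qed
    have r4: "measure M {\<omega>\<in>space M. \<bar>S \<omega> - Y \<omega>\<bar> > t} \<le> W * R * lam (m + 1) powr r / (\<bar>\<Delta>p\<bar> * t)"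
      if t: "0 < t" "t \<le> 1" for t
    proof -
      have "measure M {\<omega>\<in>space M. \<bar>S \<omega> - Y \<omega>\<bar> > t} \<le> measure M {\<omega>\<in>space M. D \<omega> \<ge> t}"
        by (rule P.finite_measure_mono) (auto simp: D_def)
      also have "\<dots> \<le> (\<integral>\<omega>. D \<omega> \<partial>M) / t"
        by (rule integral_Markov_inequality_measure[OF intD _ Dnn t(1), of "space M"]) simp
      also have "\<dots> \<le> (W * \<rho> / (2 * \<bar>\<Delta>p\<bar>)) / t" using EDb t(1) by (intro divide_right_mono) auto
      also have "\<dots> \<le> W * R * lam (m + 1) powr r / (\<bar>\<Delta>p\<bar> * t)"
      proof -
        have "W * \<rho> \<le> W * (R * lam (m + 1) powr r)" by (rule mult_left_mono[OF r1 W0])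
        moreover have "0 \<le> W * \<rho>" using W0 \<rho>0 by simp
        ultimately have "W * \<rho> / 2 \<le> W * (R * lam (m + 1) powr r)" by linarith
        hence "(W * \<rho> / 2) / (\<bar>\<Delta>p\<bar> * t) \<le> W * (R * lam (m + 1) powr r) / (\<bar>\<Delta>p\<bar> * t)"
          using t by (intro divide_right_mono) auto
        thus ?thesis by (simp add: field_simps)
      qed
      finally show ?thesis .
    qed
    show ?thesis using r1 r2 r3 r4 by blast
  qed
  have part2: "AE \<omega> in M. S \<omega> = Y \<omega>" if H: "\<forall>N. \<exists>m\<ge>N. \<forall>y\<in>{0, 1}. orth_proj (span (e ` {1..m})) (\<delta> y) = 0"
  proof -
    have "\<rho> \<le> 0"
    proof (rule ccontr)
      assume "\<not> \<rho> \<le> 0" hence rp: "\<rho> > 0" by simp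
      have fl: "filterlim (\<lambda>m::nat. real (Suc m)) at_top sequentially"
        by (rule filterlim_compose[OF filterlim_real_sequentially filterlim_Suc])
      have "(\<lambda>m::nat. real (Suc m) powr (-\<alpha> * r)) \<longlonglongrightarrow> 0"
        by (rule tendsto_neg_powr[OF _ fl]) (use \<alpha> r in \<open>simp add: mult_pos_pos\<close>)
      hence "(\<lambda>m::nat. c\<^sub>2 powr r * (R * real (Suc m) powr (-\<alpha> * r))) \<longlonglongrightarrow> c\<^sub>2 powr r * (R * 0)"
        by (intro tendsto_mult tendsto_const)
      hence "eventually (\<lambda>m. c\<^sub>2 powr r * (R * real (Suc m) powr (-\<alpha> * r)) < \<rho>) sequentially"
        using rp by (intro order_tendstoD(2)) auto
      then obtain N where N: "\<forall>m\<ge>N. c\<^sub>2 powr r * (R * real (Suc m) powr (-\<alpha> * r)) < \<rho>"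
        unfolding eventually_sequentially by blast
      obtain m where "m \<ge> N" and hm: "\<forall>y\<in>{0, 1}. orth_proj (span (e ` {1..m})) (\<delta> y) = 0"
        using H by blast
      have "\<rho> \<le> c\<^sub>2 powr r * (R * real (m + 1) powr (-\<alpha> * r))" using part1[OF hm] by linarith
      moreover have "c\<^sub>2 powr r * (R * real (Suc m) powr (-\<alpha> * r)) < \<rho>" using N \<open>m \<ge> N\<close> by blast
      ultimately show False by simp
    qed
    hence "\<rho> = 0" using \<rho>0 by simp
    hence "(\<integral>\<omega>. D \<omega> \<partial>M) \<le> 0" using EDb by simp
    moreover have "(\<integral>\<omega>. D \<omega> \<partial>M) \<ge> 0" using Dnn by (rule integral_nonneg_AE)
    ultimately have "(\<integral>\<omega>. D \<omega> \<partial>M) = 0" by simp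
    hence "AE \<omega> in M. D \<omega> = 0" using integral_nonneg_eq_0_iff_AE[OF intD Dnn] by simp
    thus ?thesis by eventually_elim (simp add: D_def)
  qed
  show ?thesis
    using part1 part2 unfolding Let_def \<rho>_def[symmetric] by blast
qed

end
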